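(* Let $n,m\in\mathbb{N}$ and $f:\mathbb{F}_2^n\to\mathbb{F}_2$. Then for every $\mathbf{z}\in\mathbb{F}_2^n$, $$C^{(m)}_f(\mathbf{z})=\zeta_m^{wt(\mathbf{z})}\sum_{\mathbf{u}\in\mathbb{F}_2^n}\left|\mathcal{H}^{(m)}_f(\mathbf{u})\right|^2(-1)^{\mathbf{u}\cdot\mathbf{z}}.$$
   Context: $\zeta_m=e^{2\pi i/m}$; $wt$ is Hamming weight; $\mathbf{x}\cdot\mathbf{y}=\bigoplus_i x_iy_i\in\mathbb{F}_2$; $\mathbf{x}\odot\mathbf{y}=\sum_i x_iy_i$ computed in the integers. The $m$-Hadamard transform is $\mathcal{H}^{(m)}_f(\boldsymbol{\omega})=2^{-n/2}\sum_{\mathbf{x}\in\mathbb{F}_2^n}(-1)^{f(\mathbf{x})\oplus\mathbf{x}\cdot\boldsymbol{\omega}}\zeta_m^{wt(\mathbf{x})}$, and the $m$-autocorrelation is $C^{(m)}_{f}(\mathbf{y})=\sum_{\mathbf{x}\in\mathbb{F}_2^n}(-1)^{f(\mathbf{x})\oplus f(\mathbf{x}\oplus\mathbf{y})}(\zeta_m^2)^{\mathbf{x}\odot\mathbf{y}}$. *)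

theory Defs
  imports Complex_Main
begin

text \<open>Vectors of F_2^n are represented as boolean lists of length n
  (True = 1, False = 0).\<close>

definition vecs :: "nat \<Rightarrow> bool list set" where
  "vecs n = {x. length x = n}"

definition wt :: "bool list \<Rightarrow> nat" where
  "wt x = length (filter id x)"

definition xorv :: "bool list \<Rightarrow> bool list \<Rightarrow> bool list" where
  "xorv x y = map2 (\<noteq>) x y"

definition dotF2 :: "bool list \<Rightarrow> bool list \<Rightarrow> bool" where
  "dotF2 x y = odd (length (filter id (map2 (\<and>) x y)))"

definition dotZ :: "bool list \<Rightarrow> bool list \<Rightarrow> nat" where
  "dotZ x y = length (filter id (map2 (\<and>) x y))"

definition sgnb :: "bool \<Rightarrow> complex" where
  "sgnb b = (if b then -1 else 1)"

definition zeta :: "nat \<Rightarrow> complex" where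
  "zeta m = exp (2 * of_real pi * \<i> / of_nat m)"

definition mHadamard :: "nat \<Rightarrow> nat \<Rightarrow> (bool list \<Rightarrow> bool) \<Rightarrow> bool list \<Rightarrow> complex" where
  "mHadamard m n f w = of_real (1 / sqrt (2 ^ n)) *
     (\<Sum>x\<in>vecs n. sgnb (f x \<noteq> dotF2 x w) * zeta m ^ wt x)"

definition mAutocorr :: "nat \<Rightarrow> nat \<Rightarrow> (bool list \<Rightarrow> bool) \<Rightarrow> bool list \<Rightarrow> complex" where
  "mAutocorr m n f y = (\<Sum>x\<in>vecs n. sgnb (f x \<noteq> f (xorv x y)) * (zeta m ^ 2) ^ dotZ x y)"

end

theory Submission
  imports Defs
begin

lemma sgnb_neq: "sgnb (a \<noteq> b) = sgnb a * sgnb b"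
  by (simp add: sgnb_def)

lemma vecs_0: "vecs 0 = {[]}" by (auto simp: vecs_def)

lemma vecs_Suc: "vecs (Suc n) = (\<lambda>(b,u). b#u) ` (UNIV \<times> vecs n)"
  by (auto simp: vecs_def length_Suc_conv image_iff)

lemma dotF2_Cons: "dotF2 (a#x) (b#u) = ((a\<and>b) \<noteq> dotF2 x u)"
  by (cases a; cases b) (simp_all add: dotF2_def)

lemma xorv_Cons: "xorv (a#x) (b#u) = (a\<noteq>b) # xorv x u"
  by (simp add: xorv_def)

lemma sum_vecs_Suc:
  "(\<Sum>u\<in>vecs (Suc n). g u) = (\<Sum>u\<in>vecs n. g (True#u)) + (\<Sum>u\<in>vecs n. g (False#u))"
proof -
  have inj: "inj_on (\<lambda>(b,u). b#u) (UNIV \<times> vecs n)" by (auto simp: inj_on_def)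
  have fin: "finite (vecs n)"
  proof -
    have "vecs n \<subseteq> {xs. set xs \<subseteq> UNIV \<and> length xs = n}" by (auto simp: vecs_def)
    thus ?thesis using finite_lists_length_eq[of "UNIV::bool set" n] finite_subset by auto
  qed
  have "(\<Sum>u\<in>vecs (Suc n). g u) = (\<Sum>p\<in>UNIV \<times> vecs n. g (fst p # snd p))"
    unfolding vecs_Suc by (subst sum.reindex[OF inj]) (auto intro: sum.cong)
  also have "\<dots> = (\<Sum>b\<in>UNIV. \<Sum>u\<in>vecs n. g (b#u))"
    by (simp add: sum.cartesian_product case_prod_beta)
  also have "\<dots> = (\<Sum>u\<in>vecs n. g (True#u)) + (\<Sum>u\<in>vecs n. g (False#u))"
    by (simp add: UNIV_bool add.commute)
  finally show ?thesis .
qed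

lemma finite_vecs: "finite (vecs n)"
proof -
  have "vecs n \<subseteq> {xs. set xs \<subseteq> UNIV \<and> length xs = n}" by (auto simp: vecs_def)
  thus ?thesis using finite_lists_length_eq[of "UNIV::bool set" n] finite_subset by auto
qed

lemma orth:
  "x \<in> vecs n \<Longrightarrow> y \<in> vecs n \<Longrightarrow> z \<in> vecs n \<Longrightarrow>
   (\<Sum>u\<in>vecs n. sgnb (dotF2 x u) * sgnb (dotF2 y u) * sgnb (dotF2 u z))
   = (if y = xorv x z then 2 ^ n else 0)"
proof (induction n arbitrary: x y z)
  case 0
  then show ?case by (simp add: vecs_0 vecs_def dotF2_def xorv_def sgnb_def)
next
  case (Suc n)
  from Suc.prems obtain a x' c y' d z' where e: "x = a#x'" "y = c#y'" "z = d#z'"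
    and v: "x' \<in> vecs n" "y' \<in> vecs n" "z' \<in> vecs n"
    by (auto simp: vecs_def length_Suc_conv)
  note IH = Suc.IH[OF v]
  let ?T = "\<lambda>u. sgnb (dotF2 x' u) * sgnb (dotF2 y' u) * sgnb (dotF2 u z')"
  let ?k = "\<lambda>b. sgnb (a\<and>b) * sgnb (c\<and>b) * sgnb (b\<and>d)"
  have t: "sgnb (dotF2 (a#x') (b#u)) * sgnb (dotF2 (c#y') (b#u)) * sgnb (dotF2 (b#u) (d#z'))
      = ?k b * ?T u" for b u
    unfolding dotF2_Cons sgnb_neq by (simp add: algebra_simps)
  have "(\<Sum>u\<in>vecs (Suc n). sgnb (dotF2 x u) * sgnb (dotF2 y u) * sgnb (dotF2 u z))
     = (?k True + ?k False) * (\<Sum>u\<in>vecs n. ?T u)"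
    unfolding e sum_vecs_Suc t by (simp add: sum_distrib_left[symmetric] algebra_simps)
  also have "\<dots> = (if y = xorv x z then 2 ^ Suc n else 0)"
    unfolding IH e xorv_Cons by (cases a; cases c; cases d) (auto simp: sgnb_def)
  finally show ?case .
qed

lemma wt_xor: "length x = length z \<Longrightarrow> wt x + wt z = wt (xorv x z) + 2 * dotZ x z"
  by (induction x z rule: list_induct2) (auto simp: wt_def xorv_def dotZ_def)

lemma xorv_vecs: "x \<in> vecs n \<Longrightarrow> z \<in> vecs n \<Longrightarrow> xorv x z \<in> vecs n"
  by (simp add: vecs_def xorv_def)

lemma zeta_norm: "cnj (zeta m) * zeta m = 1"
proof -
  have "norm (zeta m) = 1" by (simp add: zeta_def norm_exp_eq_Re)
  then show ?thesis
    by (metis complex_norm_square mult.commute of_real_1 power_one)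
qed


lemma mH_expand:
  "mHadamard m n f u = of_real (1 / sqrt (2 ^ n)) *
     (\<Sum>x\<in>vecs n. sgnb (f x) * zeta m ^ wt x * sgnb (dotF2 x u))"
  unfolding mHadamard_def sgnb_neq by (simp add: algebra_simps)

theorem corollary1:
  fixes n m :: nat and f :: "bool list \<Rightarrow> bool" and z :: "bool list"
  assumes "z \<in> vecs n"
  shows "mAutocorr m n f z =
    zeta m ^ wt z * (\<Sum>u\<in>vecs n. (of_real (cmod (mHadamard m n f u)))\<^sup>2 * sgnb (dotF2 u z))"
proof -
  define \<zeta> where "\<zeta> = zeta m"
  define c :: complex where "c = of_real (1 / sqrt (2 ^ n))"
  define A where "A = (\<lambda>x. sgnb (f x) * \<zeta> ^ wt x)"
  define B where "B = (\<lambda>y. sgnb (f y) * cnj \<zeta> ^ wt y)"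
  have cc: "c * c = 1 / 2 ^ n"
  proof -
    have "(1 / sqrt (2 ^ n)) * (1 / sqrt (2 ^ n)) = (1 / 2 ^ n :: real)"
      by (simp add: real_sqrt_mult_self)
    then have "of_real ((1 / sqrt (2 ^ n)) * (1 / sqrt (2 ^ n))) = (of_real (1 / 2 ^ n) :: complex)"
      by simp
    then show ?thesis unfolding c_def of_real_mult by simp
  qed
  have cnjc: "cnj c = c" unfolding c_def by simp
  have sg_cnj: "cnj (sgnb b) = sgnb b" for b by (simp add: sgnb_def)
  have sq: "(of_real (cmod (mHadamard m n f u)))\<^sup>2 =
      c * c * (\<Sum>x\<in>vecs n. \<Sum>y\<in>vecs n. A x * B y * (sgnb (dotF2 x u) * sgnb (dotF2 y u)))" for u
  proof -
    have "(of_real (cmod (mHadamard m n f u)))\<^sup>2 = mHadamard m n f u * cnj (mHadamard m n f u)"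
      using complex_norm_square[of "mHadamard m n f u"] by simp
    also have "\<dots> = c * c * ((\<Sum>x\<in>vecs n. A x * sgnb (dotF2 x u)) * (\<Sum>y\<in>vecs n. B y * sgnb (dotF2 y u)))"
      unfolding mH_expand c_def[symmetric] A_def B_def \<zeta>_def
      by (simp add: cnjc sg_cnj cnj_sum algebra_simps)
    also have "\<dots> = c * c * (\<Sum>x\<in>vecs n. \<Sum>y\<in>vecs n. A x * B y * (sgnb (dotF2 x u) * sgnb (dotF2 y u)))"
      by (simp add: sum_product algebra_simps)
    finally show ?thesis .
  qed
  have "(\<Sum>u\<in>vecs n. (of_real (cmod (mHadamard m n f u)))\<^sup>2 * sgnb (dotF2 u z))
     = c * c * (\<Sum>x\<in>vecs n. \<Sum>y\<in>vecs n. A x * B y *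
          (\<Sum>u\<in>vecs n. sgnb (dotF2 x u) * sgnb (dotF2 y u) * sgnb (dotF2 u z)))"
  proof -
    have "(\<Sum>u\<in>vecs n. (of_real (cmod (mHadamard m n f u)))\<^sup>2 * sgnb (dotF2 u z))
      = c * c * (\<Sum>u\<in>vecs n. \<Sum>x\<in>vecs n. \<Sum>y\<in>vecs n. A x * B y *
          (sgnb (dotF2 x u) * sgnb (dotF2 y u) * sgnb (dotF2 u z)))"
      unfolding sq sum_distrib_left sum_distrib_right
      by (intro sum.cong refl) (simp only: mult_ac)
    also have "\<dots> = c * c * (\<Sum>x\<in>vecs n. \<Sum>u\<in>vecs n. \<Sum>y\<in>vecs n. A x * B y *
          (sgnb (dotF2 x u) * sgnb (dotF2 y u) * sgnb (dotF2 u z)))"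
      by (subst sum.swap) (rule refl)
    also have "\<dots> = c * c * (\<Sum>x\<in>vecs n. \<Sum>y\<in>vecs n. \<Sum>u\<in>vecs n. A x * B y *
          (sgnb (dotF2 x u) * sgnb (dotF2 y u) * sgnb (dotF2 u z)))"
      by (intro arg_cong[where f="\<lambda>t. c * c * t"] sum.cong refl sum.swap)
    finally show ?thesis by (simp only: sum_distrib_left)
  qed
  also have "\<dots> = c * c * (\<Sum>x\<in>vecs n. A x * B (xorv x z) * 2 ^ n)"
  proof -
    have "(\<Sum>y\<in>vecs n. A x * B y *
          (\<Sum>u\<in>vecs n. sgnb (dotF2 x u) * sgnb (dotF2 y u) * sgnb (dotF2 u z)))
        = A x * B (xorv x z) * 2 ^ n" if x: "x \<in> vecs n" for x
    proof -
      have "(\<Sum>y\<in>vecs n. A x * B y *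
          (\<Sum>u\<in>vecs n. sgnb (dotF2 x u) * sgnb (dotF2 y u) * sgnb (dotF2 u z)))
          = (\<Sum>y\<in>vecs n. if y = xorv x z then A x * B y * 2 ^ n else 0)"
        by (rule sum.cong) (auto simp: orth[OF x _ assms])
      also have "\<dots> = A x * B (xorv x z) * 2 ^ n"
        using xorv_vecs[OF x assms] by (simp add: sum.delta' finite_vecs)
      finally show ?thesis .
    qed
    then show ?thesis by (auto intro: sum.cong)
  qed
  also have "\<dots> = (\<Sum>x\<in>vecs n. A x * B (xorv x z))"
    by (simp add: cc sum_distrib_left)
  finally have R: "(\<Sum>u\<in>vecs n. (of_real (cmod (mHadamard m n f u)))\<^sup>2 * sgnb (dotF2 u z))
     = (\<Sum>x\<in>vecs n. A x * B (xorv x z))" .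
  have "zeta m ^ wt z * (A x * B (xorv x z)) =
      sgnb (f x \<noteq> f (xorv x z)) * (zeta m ^ 2) ^ dotZ x z" if x: "x \<in> vecs n" for x
  proof -
    have len: "length x = length z" using x assms by (simp add: vecs_def)
    have "\<zeta> ^ wt z * \<zeta> ^ wt x * cnj \<zeta> ^ wt (xorv x z)
        = \<zeta> ^ (wt (xorv x z) + 2 * dotZ x z) * cnj \<zeta> ^ wt (xorv x z)"
      using wt_xor[OF len] by (simp add: power_add[symmetric] add.commute)
    also have "\<dots> = (cnj \<zeta> * \<zeta>) ^ wt (xorv x z) * (\<zeta> ^ 2) ^ dotZ x z"
      by (simp add: power_add power_mult power_mult_distrib mult_ac flip: power_mult)
    also have "\<dots> = (\<zeta> ^ 2) ^ dotZ x z" using zeta_norm[of m] by (simp add: \<zeta>_def)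
    finally show ?thesis unfolding A_def B_def sgnb_neq \<zeta>_def by (simp add: algebra_simps)
  qed
  then show ?thesis
    unfolding R mAutocorr_def sum_distrib_left by (auto intro: sum.cong)
qed

end
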